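(* Let $\langle A,\to\rangle$ be a conditional algebra. The correspondence $B\mapsto E_B$ is a dual lattice isomorphism between the lattice of domains of subalgebras of $\langle A,\to\rangle$ (Boolean subalgebras of $A$ closed under $\to$) and the lattice of C-equivalences of the expanded Stone space $\langle\mathrm{Ul}(A),\tau_s,T_A\rangle$.
   Context: A conditional algebra is $\langle A,\to\rangle$ with $A$ a Boolean algebra and $\to$ binary with $a\to1=1$, $(a\to b)\wedge(a\to c)=a\to(b\wedge c)$, $(a\vee b)\to c\le(a\to c)\wedge(b\to c)$. $\mathrm{Ul}(A)$ is the Stone space of ultrafilters; closed sets are the sets $\varphi(F)=\{u:F\subseteq u\}$ for filters $F$ (the improper filter $A$ included). $D^{\to}_u(F)=\{b:\exists a\in F,\ a\to b\in u\}$; $T_A(u,Z,v)$ iff there is a filter $F$ with $Z=\varphi(F)$ and $D^{\to}_u(F)\subseteq v$. $E_B=\{(u,v): u\cap B=v\cap B\}$. For an equivalence $E$ and closed $Y,C$: $Y\preceq_E C$ iff every $y\in Y$ is $E$-related to some $x\in C$. $E$ is a C-equivalence if it is a Boolean equivalence (for each $(x,y)\notin E$ there is a clopen $E$-closed set containing $x$ but not $y$) and whenever $E(x,y)$ and $T_A(x,Y,x')$ with $Y$ closed, there are $y'$ with $E(x',y')$ and closed $C$ with $T_A(y,C,y')$ and $C\preceq_E Y$. *)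

theory Defs
  imports "HOL-Analysis.Analysis"
begin

definition conditional_algebra :: "('a::boolean_algebra \<Rightarrow> 'a \<Rightarrow> 'a) \<Rightarrow> bool" where
  "conditional_algebra imp \<longleftrightarrow>
     (\<forall>a. imp a top = top) \<and>
     (\<forall>a b c. inf (imp a b) (imp a c) = imp a (inf b c)) \<and>
     (\<forall>a b c. imp (sup a b) c \<le> inf (imp a c) (imp b c))"

definition subalgebra_dom :: "('a::boolean_algebra \<Rightarrow> 'a \<Rightarrow> 'a) \<Rightarrow> 'a set \<Rightarrow> bool" where
  "subalgebra_dom imp B \<longleftrightarrow>
     top \<in> B \<and> bot \<in> B \<and>
     (\<forall>a\<in>B. \<forall>b\<in>B. sup a b \<in> B) \<and>
     (\<forall>a\<in>B. \<forall>b\<in>B. inf a b \<in> B) \<and>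
     (\<forall>a\<in>B. - a \<in> B) \<and>
     (\<forall>a\<in>B. \<forall>b\<in>B. imp a b \<in> B)"

text \<open>Filters of a Boolean algebra (the improper filter UNIV included).\<close>
definition bfilter :: "'a::boolean_algebra set \<Rightarrow> bool" where
  "bfilter F \<longleftrightarrow> top \<in> F \<and> (\<forall>a\<in>F. \<forall>b. a \<le> b \<longrightarrow> b \<in> F) \<and>
                  (\<forall>a\<in>F. \<forall>b\<in>F. inf a b \<in> F)"

definition ultrafilter :: "'a::boolean_algebra set \<Rightarrow> bool" where
  "ultrafilter u \<longleftrightarrow> bfilter u \<and> bot \<notin> u \<and> (\<forall>a. a \<in> u \<or> - a \<in> u)"

definition Ul :: "'a::boolean_algebra set set" where
  "Ul = {u. ultrafilter u}"

definition stone_top :: "'a::boolean_algebra set topology" where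
  "stone_top = topology_generated_by {{u \<in> Ul. a \<in> u} | a. True}"

definition phi :: "'a::boolean_algebra set \<Rightarrow> 'a set set" where
  "phi F = {u \<in> Ul. F \<subseteq> u}"

definition Dimp :: "('a \<Rightarrow> 'a \<Rightarrow> 'a) \<Rightarrow> 'a set \<Rightarrow> 'a set \<Rightarrow> 'a set" where
  "Dimp imp u F = {b. \<exists>a\<in>F. imp a b \<in> u}"

definition TA :: "('a::boolean_algebra \<Rightarrow> 'a \<Rightarrow> 'a) \<Rightarrow> 'a set \<Rightarrow> 'a set set \<Rightarrow> 'a set \<Rightarrow> bool" where
  "TA imp u Z v \<longleftrightarrow> u \<in> Ul \<and> v \<in> Ul \<and>
     (\<exists>F. bfilter F \<and> Z = phi F \<and> Dimp imp u F \<subseteq> v)"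

definition EB :: "'a::boolean_algebra set \<Rightarrow> ('a set \<times> 'a set) set" where
  "EB B = {(u, v). u \<in> Ul \<and> v \<in> Ul \<and> u \<inter> B = v \<inter> B}"

definition E_closed :: "('b \<times> 'b) set \<Rightarrow> 'b set \<Rightarrow> bool" where
  "E_closed E S \<longleftrightarrow> (\<forall>x y. (x, y) \<in> E \<longrightarrow> x \<in> S \<longrightarrow> y \<in> S)"

definition E_preceq :: "('b \<times> 'b) set \<Rightarrow> 'b set \<Rightarrow> 'b set \<Rightarrow> bool" where
  "E_preceq E Y C \<longleftrightarrow> (\<forall>y\<in>Y. \<exists>x\<in>C. (y, x) \<in> E)"

definition boolean_equivalence :: "('a::boolean_algebra set \<times> 'a set) set \<Rightarrow> bool" where
  "boolean_equivalence E \<longleftrightarrow> equiv Ul E \<and>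
     (\<forall>x\<in>Ul. \<forall>y\<in>Ul. (x, y) \<notin> E \<longrightarrow>
        (\<exists>S. openin stone_top S \<and> closedin stone_top S \<and> E_closed E S \<and> x \<in> S \<and> y \<notin> S))"

definition C_equivalence :: "('a::boolean_algebra \<Rightarrow> 'a \<Rightarrow> 'a) \<Rightarrow> ('a set \<times> 'a set) set \<Rightarrow> bool" where
  "C_equivalence imp E \<longleftrightarrow> boolean_equivalence E \<and>
     (\<forall>x y x' Y. (x, y) \<in> E \<longrightarrow> closedin stone_top Y \<longrightarrow> TA imp x Y x' \<longrightarrow>
        (\<exists>y' C. (x', y') \<in> E \<and> closedin stone_top C \<and> TA imp y C y' \<and> E_preceq E C Y))"

end

theory Submission imports Defs begin

lemma bfilter_upclosed: "bfilter F \<Longrightarrow> a \<in> F \<Longrightarrow> a \<le> b \<Longrightarrow> b \<in> F"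
  unfolding bfilter_def by blast

lemma ultra_exists_filter:
  fixes F :: "'a::boolean_algebra set"
  assumes "bfilter F" "bot \<notin> F"
  shows "\<exists>u\<in>Ul. F \<subseteq> u"
proof -
  let ?A = "{G. bfilter G \<and> bot \<notin> G \<and> F \<subseteq> G}"
  have "\<forall>C\<in>chains ?A. \<exists>U\<in>?A. \<forall>X\<in>C. X \<subseteq> U"
  proof
    fix C assume C: "C \<in> chains ?A"
    show "\<exists>U\<in>?A. \<forall>X\<in>C. X \<subseteq> U"
    proof (cases "C = {}")
      case True then show ?thesis using assms by auto
    next
      case False
      have sub: "C \<subseteq> ?A" and ch: "\<forall>X\<in>C. \<forall>Y\<in>C. X \<subseteq> Y \<or> Y \<subseteq> X"
        using C unfolding chains_def chain_subset_def by auto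
      have "bfilter (\<Union>C)"
        unfolding bfilter_def
      proof (intro conjI ballI allI impI)
        show "top \<in> \<Union>C" using False sub unfolding bfilter_def by blast
      next
        fix a b assume "a \<in> \<Union>C" "a \<le> b" then show "b \<in> \<Union>C"
          using sub unfolding bfilter_def by blast
      next
        fix a b assume a: "a \<in> \<Union>C" and b: "b \<in> \<Union>C"
        then obtain X Y where X: "X \<in> C" "a \<in> X" and Y: "Y \<in> C" "b \<in> Y" by blast
        show "inf a b \<in> \<Union>C"
        proof (cases "X \<subseteq> Y")
          case True then show ?thesis using X Y sub unfolding bfilter_def by blast
        next
          case False then have "Y \<subseteq> X" using ch X Y by blast
          then show ?thesis using X Y sub unfolding bfilter_def by blast
        qed
      qed
      moreover have "bot \<notin> \<Union>C" "F \<subseteq> \<Union>C" using sub False by auto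
      ultimately show ?thesis by blast
    qed
  qed
  from Zorn_Lemma2[OF this] obtain M where M: "M \<in> ?A" and max: "\<forall>X\<in>?A. M \<subseteq> X \<longrightarrow> X = M" by blast
  have "ultrafilter M" unfolding ultrafilter_def
  proof (intro conjI allI)
    show "bfilter M" "bot \<notin> M" using M by auto
  next
    fix a show "a \<in> M \<or> - a \<in> M"
    proof (rule ccontr)
      assume n: "\<not> (a \<in> M \<or> - a \<in> M)"
      let ?G = "{x. \<exists>f\<in>M. inf f a \<le> x}"
      have fM: "bfilter M" using M by auto
      have "?G \<in> ?A"
      proof (intro CollectI conjI)
        show "bfilter ?G" unfolding bfilter_def
        proof (intro conjI ballI allI impI)
          show "top \<in> ?G" using fM unfolding bfilter_def by auto
        next
          fix x y assume "x \<in> ?G" "x \<le> y" then show "y \<in> ?G" using order_trans by blast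
        next
          fix x y assume "x \<in> ?G" "y \<in> ?G"
          then obtain f g where f: "f \<in> M" "inf f a \<le> x" and g: "g \<in> M" "inf g a \<le> y" by blast
          have "inf (inf f g) a \<le> inf x y" using f g by (meson inf.bounded_iff inf_le1 inf_le2 order_trans)
          moreover have "inf f g \<in> M" using f g fM unfolding bfilter_def by blast
          ultimately show "inf x y \<in> ?G" by blast
        qed
      next
        show "bot \<notin> ?G"
        proof
          assume "bot \<in> ?G"
          then obtain f where f: "f \<in> M" "inf f a \<le> bot" by blast
          then have "f \<le> - a" by (metis bot_unique inf_shunt)
          then show False using f n fM bfilter_upclosed by blast
        qed
      next
        show "F \<subseteq> ?G" using M by (auto intro: le_infI1)
      qed
      moreover have "M \<subseteq> ?G" by (auto intro: le_infI1)
      ultimately have "?G = M" using max by blast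
      moreover have "a \<in> ?G" using fM unfolding bfilter_def by (auto intro: le_infI2)
      ultimately show False using n by blast
    qed
  qed
  then show ?thesis using M unfolding Ul_def by blast
qed

lemma ultra_exists:
  fixes S :: "'a::boolean_algebra set"
  assumes "S \<noteq> {}" "\<forall>x\<in>S. \<forall>y\<in>S. inf x y \<in> S" "bot \<notin> S"
  shows "\<exists>u\<in>Ul. S \<subseteq> u"
proof -
  let ?F = "{x. \<exists>s\<in>S. s \<le> x}"
  have "bfilter ?F" unfolding bfilter_def
  proof (intro conjI ballI allI impI)
    show "top \<in> ?F" using assms(1) by auto
  next
    fix x y assume "x \<in> ?F" "x \<le> y" then show "y \<in> ?F" using order_trans by blast
  next
    fix x y assume "x \<in> ?F" "y \<in> ?F"
    then obtain s t where st: "s \<in> S" "s \<le> x" "t \<in> S" "t \<le> y" by blast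
    then have "inf s t \<in> S" "inf s t \<le> inf x y" using assms(2) inf_mono[OF st(2) st(4)] by auto
    then show "inf x y \<in> ?F" by blast
  qed
  moreover have "bot \<notin> ?F"
  proof
    assume "bot \<in> ?F"
    then obtain s where "s \<in> S" "s \<le> bot" by blast
    then have "s = bot" by (simp add: bot_unique)
    then show False using assms(3) \<open>s \<in> S\<close> by simp
  qed
  ultimately have "\<exists>u\<in>Ul. ?F \<subseteq> u" by (rule ultra_exists_filter)
  then obtain u where u: "u \<in> Ul" "?F \<subseteq> u" by blast
  have "S \<subseteq> ?F" by auto
  then show ?thesis using u by blast
qed

lemma ultra_props:
  assumes "u \<in> Ul"
  shows "top \<in> u" "bot \<notin> u" "a \<in> u \<Longrightarrow> a \<le> b \<Longrightarrow> b \<in> u"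
    "inf a b \<in> u \<longleftrightarrow> a \<in> u \<and> b \<in> u"
    "- a \<in> u \<longleftrightarrow> a \<notin> u"
    "sup a b \<in> u \<longleftrightarrow> a \<in> u \<or> b \<in> u"
proof -
  have f: "bfilter u" "bot \<notin> u" "\<forall>a. a \<in> u \<or> - a \<in> u"
    using assms unfolding Ul_def ultrafilter_def by auto
  show "top \<in> u" "bot \<notin> u" using f unfolding bfilter_def by auto
  show "a \<in> u \<Longrightarrow> a \<le> b \<Longrightarrow> b \<in> u" using f unfolding bfilter_def by auto
  show i: "inf a b \<in> u \<longleftrightarrow> a \<in> u \<and> b \<in> u" for a b
    using f unfolding bfilter_def by (meson inf_le1 inf_le2)
  show c: "- a \<in> u \<longleftrightarrow> a \<notin> u" for a
    using f i[of a "-a"] by auto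
  show "sup a b \<in> u \<longleftrightarrow> a \<in> u \<or> b \<in> u"
    using f c i[of "-a" "-b"] unfolding bfilter_def
    by (metis compl_sup double_compl sup_ge1 sup_ge2)
qed

lemma ultra_exists2:
  fixes S T :: "'a::boolean_algebra set"
  assumes "S \<noteq> {}" "\<forall>x\<in>S. \<forall>y\<in>S. inf x y \<in> S" "T \<noteq> {}" "\<forall>x\<in>T. \<forall>y\<in>T. inf x y \<in> T"
    "\<forall>s\<in>S. \<forall>t\<in>T. inf s t \<noteq> bot"
  shows "\<exists>u\<in>Ul. S \<subseteq> u \<and> T \<subseteq> u"
proof -
  let ?R = "{inf s t | s t. s \<in> S \<and> t \<in> T}"
  have "?R \<noteq> {}" using assms(1,3) by blast
  moreover have "\<forall>x\<in>?R. \<forall>y\<in>?R. inf x y \<in> ?R"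
  proof (intro ballI)
    fix x y assume "x \<in> ?R" "y \<in> ?R"
    then obtain s t s' t' where "x = inf s t" "y = inf s' t'" "s \<in> S" "t \<in> T" "s' \<in> S" "t' \<in> T" by blast
    moreover have "inf x y = inf (inf s s') (inf t t')" using calculation by (simp add: inf_aci)
    ultimately show "inf x y \<in> ?R" using assms(2,4) by blast
  qed
  moreover have "bot \<notin> ?R" using assms(5) by force
  ultimately have "\<exists>u\<in>Ul. ?R \<subseteq> u" by (rule ultra_exists)
  then obtain u where u: "u \<in> Ul" "?R \<subseteq> u" by blast
  have "S \<subseteq> u"
  proof
    fix s assume "s \<in> S" then obtain t where "t \<in> T" using assms(3) by blast
    then have "inf s t \<in> u" using u \<open>s \<in> S\<close> by blast
    then show "s \<in> u" using ultra_props(4)[OF u(1)] by blast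
  qed
  moreover have "T \<subseteq> u"
  proof
    fix t assume "t \<in> T" then obtain s where "s \<in> S" using assms(1) by blast
    then have "inf s t \<in> u" using u \<open>t \<in> T\<close> by blast
    then show "t \<in> u" using ultra_props(4)[OF u(1)] by blast
  qed
  ultimately show ?thesis using u by blast
qed

lemma trace_eq:
  assumes "u \<in> Ul" "v \<in> Ul" "\<forall>a\<in>B. - a \<in> B" "v \<inter> B \<subseteq> u"
  shows "u \<inter> B = v \<inter> B"
proof -
  have "c \<in> v" if "c \<in> u" "c \<in> B" for c
  proof (rule ccontr)
    assume "c \<notin> v"
    then have "- c \<in> v" using ultra_props(5)[OF assms(2)] by blast
    then have "- c \<in> u" using assms that by blast
    then show False using ultra_props(5)[OF assms(1)] that by blast
  qed
  then show ?thesis using assms by blast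
qed

definition basic :: "'a::boolean_algebra \<Rightarrow> 'a set set" where
  "basic a = {u \<in> Ul. a \<in> u}"

lemma topspace_stone: "topspace stone_top = Ul"
proof -
  have "\<Union>{{u \<in> Ul. a \<in> u} | a::'a. True} = Ul"
  proof
    show "\<Union>{{u \<in> Ul. a \<in> u} | a::'a. True} \<subseteq> Ul" by auto
  next
    show "Ul \<subseteq> \<Union>{{u \<in> Ul. a \<in> u} | a::'a. True}"
    proof
      fix u :: "'a set" assume "u \<in> Ul"
      then have "u \<in> {v \<in> Ul. top \<in> v}" using ultra_props(1) by blast
      then show "u \<in> \<Union>{{u \<in> Ul. a \<in> u} | a::'a. True}" by blast
    qed
  qed
  then show ?thesis unfolding stone_top_def topology_generated_by_topspace by simp
qed

lemma open_basic: "openin stone_top (basic a)"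
  unfolding stone_top_def basic_def by (rule topology_generated_by_Basis) blast

lemma basic_compl: "Ul - basic a = basic (- a)"
  unfolding basic_def by (auto simp: ultra_props(5))

lemma basic_inf: "basic (inf a b) = basic a \<inter> basic b"
  unfolding basic_def by (auto simp: ultra_props(4))

lemma basic_sup: "basic (sup a b) = basic a \<union> basic b"
  unfolding basic_def by (auto simp: ultra_props(6))

lemma basic_bot: "basic bot = {}"
  unfolding basic_def by (auto simp: ultra_props(2))

lemma basic_top: "basic top = Ul"
  unfolding basic_def by (auto simp: ultra_props(1))

lemma closed_basic: "closedin stone_top (basic a)"
  unfolding closedin_def topspace_stone basic_compl
  using open_basic by (auto simp: basic_def)

lemma open_char:
  assumes "openin stone_top S"
  shows "S \<subseteq> Ul \<and> (\<forall>u\<in>S. \<exists>a. a \<in> u \<and> basic a \<subseteq> S)"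
proof -
  have "generate_topology_on {{u \<in> Ul. a \<in> u} | a. True} S"
    using assms unfolding stone_top_def by (rule openin_topology_generated_by)
  then show ?thesis
  proof (induction rule: generate_topology_on.induct)
    case Empty then show ?case by simp
  next
    case (Int a b)
    show ?case
    proof (intro conjI ballI)
      show "a \<inter> b \<subseteq> Ul" using Int.IH by auto
    next
      fix u assume u: "u \<in> a \<inter> b"
      have ia: "\<forall>u\<in>a. \<exists>c. c \<in> u \<and> basic c \<subseteq> a" and ib: "\<forall>u\<in>b. \<exists>c. c \<in> u \<and> basic c \<subseteq> b"
        and ua: "a \<subseteq> Ul" using Int.IH by auto
      obtain x where "x \<in> u" "basic x \<subseteq> a" using ia u by blast
      moreover obtain y where "y \<in> u" "basic y \<subseteq> b" using ib u by blast
      moreover have "u \<in> Ul" using ua u by blast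
      moreover have "inf x y \<in> u" using calculation ultra_props(4) by metis
      ultimately show "\<exists>c. c \<in> u \<and> basic c \<subseteq> a \<inter> b" using basic_inf by blast
    qed
  next
    case (UN K)
    show ?case
    proof (intro conjI ballI)
      show "\<Union>K \<subseteq> Ul" using UN.IH by blast
    next
      fix u assume "u \<in> \<Union>K"
      then obtain k where k: "k \<in> K" "u \<in> k" by blast
      then have "\<exists>c. c \<in> u \<and> basic c \<subseteq> k" using UN.IH by blast
      then show "\<exists>c. c \<in> u \<and> basic c \<subseteq> \<Union>K" using k by blast
    qed
  next
    case (Basis s)
    then obtain a where "s = {u \<in> Ul. a \<in> u}" by blast
    then have "s = basic a" unfolding basic_def by simp
    then show ?case unfolding basic_def by auto
  qed
qed

lemma closed_phi:
  assumes "bfilter G"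
  shows "closedin stone_top (phi G)"
proof -
  have "Ul - phi G = \<Union> {basic (- g) | g. g \<in> G}"
    unfolding phi_def basic_def using ultra_props(5) by blast
  moreover have "openin stone_top (\<Union> {basic (- g) | g. g \<in> G})"
    using open_basic by (intro openin_Union) blast
  ultimately show ?thesis unfolding closedin_def topspace_stone phi_def by auto
qed

lemma clopen_basic:
  assumes "openin stone_top S" "closedin stone_top S"
  shows "\<exists>a. S = basic a"
proof -
  have oS: "S \<subseteq> Ul" "\<forall>u\<in>S. \<exists>a. a \<in> u \<and> basic a \<subseteq> S" using open_char[OF assms(1)] by auto
  have "openin stone_top (Ul - S)" using assms(2) unfolding closedin_def topspace_stone by auto
  then have oT: "\<forall>u\<in>Ul - S. \<exists>a. a \<in> u \<and> basic a \<subseteq> Ul - S" using open_char by blast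
  let ?I = "{a. basic a \<subseteq> S}" and ?J = "{b. basic b \<subseteq> Ul - S}"
  have "\<exists>a\<in>?I. \<exists>b\<in>?J. sup a b = top"
  proof (rule ccontr)
    assume n: "\<not> ?thesis"
    let ?R = "{- sup a b | a b. a \<in> ?I \<and> b \<in> ?J}"
    have "?R \<noteq> {}" using basic_bot by blast
    moreover have "\<forall>x\<in>?R. \<forall>y\<in>?R. inf x y \<in> ?R"
    proof (intro ballI)
      fix x y assume "x \<in> ?R" "y \<in> ?R"
      then obtain a b a' b' where ab: "x = - sup a b" "y = - sup a' b'" "a \<in> ?I" "b \<in> ?J" "a' \<in> ?I" "b' \<in> ?J"
        by blast
      have "inf x y = - sup (sup a a') (sup b b')" using ab by (simp add: inf.assoc inf.left_commute inf.commute)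
      moreover have "sup a a' \<in> ?I" "sup b b' \<in> ?J" using ab by (auto simp: basic_sup)
      ultimately show "inf x y \<in> ?R" by blast
    qed
    moreover have "bot \<notin> ?R"
    proof
      assume "bot \<in> ?R"
      then obtain a b where ab: "basic a \<subseteq> S" "basic b \<subseteq> Ul - S" "- sup a b = bot" by auto
      have "sup a b = top" using ab(3) by (metis compl_bot_eq double_compl)
      then show False using n ab(1,2) by blast
    qed
    ultimately have "\<exists>u\<in>Ul. ?R \<subseteq> u" by (rule ultra_exists)
    then obtain u where u: "u \<in> Ul" "?R \<subseteq> u" by blast
    show False
    proof (cases "u \<in> S")
      case True
      then obtain a where "a \<in> u" "basic a \<subseteq> S" using oS by blast
      then have "- sup a bot \<in> u" using u basic_bot by blast
      then show False using ultra_props(5)[OF u(1)] \<open>a \<in> u\<close> by simp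
    next
      case False
      then obtain b where "b \<in> u" "basic b \<subseteq> Ul - S" using oT u by blast
      then have "- sup bot b \<in> u" using u basic_bot by blast
      then show False using ultra_props(5)[OF u(1)] \<open>b \<in> u\<close> by simp
    qed
  qed
  then obtain a b where ab: "basic a \<subseteq> S" "basic b \<subseteq> Ul - S" "sup a b = top" by blast
  have "S \<subseteq> basic a"
  proof
    fix u assume "u \<in> S"
    then have "u \<in> Ul" using oS by blast
    then have "a \<in> u \<or> b \<in> u" using ab(3) ultra_props(1,6) by metis
    then show "u \<in> basic a" using ab(2) \<open>u \<in> S\<close> \<open>u \<in> Ul\<close> unfolding basic_def by blast
  qed
  then show ?thesis using ab(1) by blast
qed


lemma ca_top: "conditional_algebra imp \<Longrightarrow> imp a top = top"
  unfolding conditional_algebra_def by blast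

lemma ca_inf: "conditional_algebra imp \<Longrightarrow> inf (imp a b) (imp a c) = imp a (inf b c)"
  unfolding conditional_algebra_def by blast

lemma ca_mono:
  assumes "conditional_algebra imp" "b \<le> c"
  shows "imp a b \<le> imp a c"
proof -
  have "imp a b = imp a (inf b c)" using assms(2) by (simp add: inf_absorb1)
  also have "\<dots> = inf (imp a b) (imp a c)" using ca_inf[OF assms(1)] by simp
  finally show ?thesis by (metis inf.cobounded2)
qed

lemma ca_anti:
  assumes "conditional_algebra imp" "a \<le> a'"
  shows "imp a' b \<le> imp a b"
proof -
  have "imp (sup a a') b \<le> inf (imp a b) (imp a' b)"
    using assms(1) unfolding conditional_algebra_def by blast
  moreover have "sup a a' = a'" using assms(2) by (simp add: sup_absorb2)
  ultimately show ?thesis by (metis inf.bounded_iff)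
qed

lemma sub_props:
  assumes "subalgebra_dom imp B"
  shows "top \<in> B" "bot \<in> B" "a \<in> B \<Longrightarrow> b \<in> B \<Longrightarrow> sup a b \<in> B"
    "a \<in> B \<Longrightarrow> b \<in> B \<Longrightarrow> inf a b \<in> B" "a \<in> B \<Longrightarrow> - a \<in> B"
    "a \<in> B \<Longrightarrow> b \<in> B \<Longrightarrow> imp a b \<in> B"
  using assms unfolding subalgebra_dom_def by auto

lemma inf_bot_le: "inf (c::'a::boolean_algebra) d = bot \<Longrightarrow> c \<le> - d"
  by (simp add: inf_shunt)

lemma sep:
  assumes sub: "subalgebra_dom imp B" and aB: "a \<notin> B"
  shows "\<exists>u\<in>Ul. \<exists>v\<in>Ul. u \<inter> B = v \<inter> B \<and> a \<in> u \<and> a \<notin> v"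
proof -
  let ?P = "{c \<in> B. a \<le> c}"
  have "\<exists>v\<in>Ul. {- a} \<subseteq> v \<and> ?P \<subseteq> v"
  proof (rule ultra_exists2)
    show "?P \<noteq> {}" using sub_props(1)[OF sub] by auto
    show "\<forall>x\<in>?P. \<forall>y\<in>?P. inf x y \<in> ?P" using sub_props(4)[OF sub] by auto
    show "\<forall>s\<in>{- a}. \<forall>t\<in>?P. inf s t \<noteq> bot"
    proof (intro ballI notI)
      fix s t assume st: "s \<in> {- a}" "t \<in> ?P" "inf s t = bot"
      then have "inf t (- a) = bot" by (simp add: inf_commute)
      then have "t \<le> a" using inf_bot_le by fastforce
      then have "t = a" using st by auto
      then show False using st aB by auto
    qed
  qed auto
  then obtain v where v: "v \<in> Ul" "- a \<in> v" "?P \<subseteq> v" by blast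
  have "\<exists>u\<in>Ul. {a} \<subseteq> u \<and> v \<inter> B \<subseteq> u"
  proof (rule ultra_exists2)
    show "v \<inter> B \<noteq> {}" using sub_props(1)[OF sub] ultra_props(1)[OF v(1)] by auto
    show "\<forall>x\<in>v \<inter> B. \<forall>y\<in>v \<inter> B. inf x y \<in> v \<inter> B"
      using sub_props(4)[OF sub] ultra_props(4)[OF v(1)] by auto
    show "\<forall>s\<in>{a}. \<forall>t\<in>v \<inter> B. inf s t \<noteq> bot"
    proof (intro ballI notI)
      fix s t assume st: "s \<in> {a}" "t \<in> v \<inter> B" "inf s t = bot"
      then have "a \<le> - t" using inf_bot_le by fastforce
      moreover have "- t \<in> B" using st sub_props(5)[OF sub] by auto
      ultimately have "- t \<in> v" using v(3) by auto
      then show False using st ultra_props(5)[OF v(1)] by auto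
    qed
  qed auto
  then obtain u where u: "u \<in> Ul" "a \<in> u" "v \<inter> B \<subseteq> u" by blast
  have "u \<inter> B = v \<inter> B" using trace_eq[OF u(1) v(1) _ u(3)] sub_props(5)[OF sub] by blast
  moreover have "a \<notin> v" using v(2) ultra_props(5)[OF v(1)] by auto
  ultimately show ?thesis using u v by blast
qed

lemma EB_equiv: "equiv Ul (EB B)"
  unfolding equiv_def refl_on_def sym_def trans_def EB_def by auto

lemma bfilter_props:
  assumes "bfilter F"
  shows "top \<in> F" "a \<in> F \<Longrightarrow> a \<le> b \<Longrightarrow> b \<in> F" "a \<in> F \<Longrightarrow> b \<in> F \<Longrightarrow> inf a b \<in> F"
  using assms unfolding bfilter_def by auto

lemma EB_Ceq:
  assumes ca: "conditional_algebra imp" and sub: "subalgebra_dom imp B"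
  shows "C_equivalence imp (EB B)"
  unfolding C_equivalence_def
proof (intro conjI allI impI)
  show "boolean_equivalence (EB B)"
    unfolding boolean_equivalence_def
  proof (intro conjI ballI impI EB_equiv)
    fix x y assume xy: "x \<in> Ul" "y \<in> Ul" "(x, y) \<notin> EB B"
    then have "x \<inter> B \<noteq> y \<inter> B" unfolding EB_def by auto
    then have "\<exists>b\<in>B. b \<in> x \<and> b \<notin> y"
    proof -
      assume ne: "x \<inter> B \<noteq> y \<inter> B"
      then obtain b where b: "b \<in> B" "(b \<in> x \<and> b \<notin> y) \<or> (b \<in> y \<and> b \<notin> x)" by blast
      show ?thesis
      proof (cases "b \<in> x")
        case True then show ?thesis using b by blast
      next
        case False
        then have "- b \<in> x" "- b \<notin> y" using b ultra_props(5)[OF xy(1)] ultra_props(5)[OF xy(2)] by auto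
        then show ?thesis using sub_props(5)[OF sub b(1)] by blast
      qed
    qed
    then obtain b where b: "b \<in> B" "b \<in> x" "b \<notin> y" by blast
    have "E_closed (EB B) (basic b)" unfolding E_closed_def EB_def basic_def using b(1) by auto
    moreover have "x \<in> basic b" "y \<notin> basic b" using b xy unfolding basic_def by auto
    ultimately show "\<exists>S. openin stone_top S \<and> closedin stone_top S \<and> E_closed (EB B) S \<and> x \<in> S \<and> y \<notin> S"
      using open_basic closed_basic by blast
  qed
next
  fix x y x' Y
  assume xy: "(x, y) \<in> EB B" and cY: "closedin stone_top Y" and T: "TA imp x Y x'"
  have xU: "x \<in> Ul" and yU: "y \<in> Ul" and xyB: "x \<inter> B = y \<inter> B" using xy unfolding EB_def by auto
  obtain F where F: "bfilter F" "Y = phi F" "Dimp imp x F \<subseteq> x'" and x'U: "x' \<in> Ul"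
    using T unfolding TA_def by blast
  define G where "G = {z. \<exists>c\<in>F \<inter> B. c \<le> z}"
  have FB: "c \<in> F \<Longrightarrow> c \<in> B \<Longrightarrow> c \<in> G" for c unfolding G_def by auto
  have G: "bfilter G" unfolding bfilter_def
  proof (intro conjI ballI allI impI)
    show "top \<in> G" using FB bfilter_props(1)[OF F(1)] sub_props(1)[OF sub] by blast
  next
    fix a b assume "a \<in> G" "a \<le> b" then show "b \<in> G" unfolding G_def using order_trans by blast
  next
    fix a b assume "a \<in> G" "b \<in> G"
    then obtain c d where cd: "c \<in> F" "c \<in> B" "c \<le> a" "d \<in> F" "d \<in> B" "d \<le> b" unfolding G_def by blast
    then have "inf c d \<in> F" "inf c d \<in> B" "inf c d \<le> inf a b"
      using bfilter_props(3)[OF F(1)] sub_props(4)[OF sub] inf_mono[OF cd(3) cd(6)] by auto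
    then show "inf a b \<in> G" unfolding G_def by blast
  qed
  have prec: "E_preceq (EB B) (phi G) Y"
    unfolding E_preceq_def
  proof
    fix z assume "z \<in> phi G"
    then have zU: "z \<in> Ul" and Gz: "G \<subseteq> z" unfolding phi_def by auto
    have "\<exists>w\<in>Ul. F \<subseteq> w \<and> z \<inter> B \<subseteq> w"
    proof (rule ultra_exists2)
      show "F \<noteq> {}" using bfilter_props(1)[OF F(1)] by auto
      show "\<forall>x\<in>F. \<forall>y\<in>F. inf x y \<in> F" using bfilter_props(3)[OF F(1)] by auto
      show "z \<inter> B \<noteq> {}" using sub_props(1)[OF sub] ultra_props(1)[OF zU] by auto
      show "\<forall>x\<in>z \<inter> B. \<forall>y\<in>z \<inter> B. inf x y \<in> z \<inter> B"
        using sub_props(4)[OF sub] ultra_props(4)[OF zU] by auto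
      show "\<forall>s\<in>F. \<forall>t\<in>z \<inter> B. inf s t \<noteq> bot"
      proof (intro ballI notI)
        fix s t assume st: "s \<in> F" "t \<in> z \<inter> B" "inf s t = bot"
        then have "s \<le> - t" using inf_bot_le by fastforce
        then have "- t \<in> F" using bfilter_props(2)[OF F(1) st(1)] by auto
        moreover have "- t \<in> B" using st sub_props(5)[OF sub] by auto
        ultimately have "- t \<in> z" using FB Gz by blast
        then show False using st ultra_props(5)[OF zU] by auto
      qed
    qed
    then obtain w where w: "w \<in> Ul" "F \<subseteq> w" "z \<inter> B \<subseteq> w" by blast
    have "w \<inter> B = z \<inter> B" using trace_eq[OF w(1) zU _ w(3)] sub_props(5)[OF sub] by blast
    then have "(z, w) \<in> EB B" using zU w(1) unfolding EB_def by auto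
    moreover have "w \<in> Y" using F(2) w unfolding phi_def by auto
    ultimately show "\<exists>w\<in>Y. (z, w) \<in> EB B" by blast
  qed
  have "\<exists>y'\<in>Ul. Dimp imp y G \<subseteq> y' \<and> x' \<inter> B \<subseteq> y'"
  proof (rule ultra_exists2)
    show "Dimp imp y G \<noteq> {}"
    proof -
      have "imp top top \<in> y" using ca_top[OF ca] ultra_props(1)[OF yU] by simp
      then have "top \<in> Dimp imp y G" using G bfilter_props(1) unfolding Dimp_def by blast
      then show ?thesis by blast
    qed
    show "\<forall>a\<in>Dimp imp y G. \<forall>b\<in>Dimp imp y G. inf a b \<in> Dimp imp y G"
    proof (intro ballI)
      fix d1 d2 assume "d1 \<in> Dimp imp y G" "d2 \<in> Dimp imp y G"
      then obtain g1 g2 where g: "g1 \<in> G" "imp g1 d1 \<in> y" "g2 \<in> G" "imp g2 d2 \<in> y"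
        unfolding Dimp_def by blast
      have gG: "inf g1 g2 \<in> G" using g bfilter_props(3)[OF G] by auto
      have "imp g1 d1 \<le> imp (inf g1 g2) d1" by (rule ca_anti[OF ca]) simp
      then have 1: "imp (inf g1 g2) d1 \<in> y" using ultra_props(3)[OF yU g(2)] by blast
      have "imp g2 d2 \<le> imp (inf g1 g2) d2" by (rule ca_anti[OF ca]) simp
      then have 2: "imp (inf g1 g2) d2 \<in> y" using ultra_props(3)[OF yU g(4)] by blast
      have "imp (inf g1 g2) (inf d1 d2) \<in> y" using 1 2 ultra_props(4)[OF yU] ca_inf[OF ca] by metis
      then show "inf d1 d2 \<in> Dimp imp y G" using gG unfolding Dimp_def by blast
    qed
    show "x' \<inter> B \<noteq> {}" using sub_props(1)[OF sub] ultra_props(1)[OF x'U] by auto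
    show "\<forall>a\<in>x' \<inter> B. \<forall>b\<in>x' \<inter> B. inf a b \<in> x' \<inter> B"
      using sub_props(4)[OF sub] ultra_props(4)[OF x'U] by auto
    show "\<forall>s\<in>Dimp imp y G. \<forall>t\<in>x' \<inter> B. inf s t \<noteq> bot"
    proof (intro ballI notI)
      fix d c assume dc: "d \<in> Dimp imp y G" "c \<in> x' \<inter> B" "inf d c = bot"
      then have dle: "d \<le> - c" using inf_bot_le by fastforce
      obtain g where g: "g \<in> G" "imp g d \<in> y" using dc(1) unfolding Dimp_def by blast
      obtain c0 where c0: "c0 \<in> F" "c0 \<in> B" "c0 \<le> g" using g(1) unfolding G_def by blast
      have "imp g d \<le> imp c0 d" using ca_anti[OF ca c0(3)] .
      also have "\<dots> \<le> imp c0 (- c)" using ca_mono[OF ca dle] .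
      finally have "imp c0 (- c) \<in> y" using ultra_props(3)[OF yU g(2)] by blast
      moreover have "imp c0 (- c) \<in> B" using sub_props(6)[OF sub c0(2) sub_props(5)[OF sub]] dc(2) by auto
      ultimately have "imp c0 (- c) \<in> x" using xyB by blast
      then have "- c \<in> Dimp imp x F" using c0(1) unfolding Dimp_def by blast
      then have "- c \<in> x'" using F(3) by blast
      then show False using dc(2) ultra_props(5)[OF x'U] by auto
    qed
  qed
  then obtain y' where y': "y' \<in> Ul" "Dimp imp y G \<subseteq> y'" "x' \<inter> B \<subseteq> y'" by blast
  have "y' \<inter> B = x' \<inter> B" using trace_eq[OF y'(1) x'U _ y'(3)] sub_props(5)[OF sub] by blast
  then have "(x', y') \<in> EB B" using x'U y'(1) unfolding EB_def by auto
  moreover have "TA imp y (phi G) y'" unfolding TA_def using yU y' G by blast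
  moreover have "closedin stone_top (phi G)" using closed_phi[OF G] .
  ultimately show "\<exists>y' C. (x', y') \<in> EB B \<and> closedin stone_top C \<and> TA imp y C y' \<and> E_preceq (EB B) C Y"
    using prec by blast
qed


lemma Ceq_surj:
  assumes ca: "conditional_algebra imp" and CE: "C_equivalence imp E"
  shows "\<exists>B. subalgebra_dom imp B \<and> E = EB B"
proof -
  have BE: "boolean_equivalence E" and CC: "\<And>x y x' Y. (x, y) \<in> E \<Longrightarrow> closedin stone_top Y \<Longrightarrow> TA imp x Y x' \<Longrightarrow>
        (\<exists>y' C. (x', y') \<in> E \<and> closedin stone_top C \<and> TA imp y C y' \<and> E_preceq E C Y)"
    using CE unfolding C_equivalence_def by blast+
  have eq: "equiv Ul E" using BE unfolding boolean_equivalence_def by blast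
  have EU: "(x, y) \<in> E \<Longrightarrow> x \<in> Ul \<and> y \<in> Ul" for x y
    using eq unfolding equiv_def refl_on_def by blast
  have Esym: "(x, y) \<in> E \<Longrightarrow> (y, x) \<in> E" for x y
    using eq unfolding equiv_def sym_def by blast
  define B where "B = {a. E_closed E (basic a)}"
  have Bmem: "a \<in> B \<Longrightarrow> (x, y) \<in> E \<Longrightarrow> a \<in> x \<longleftrightarrow> a \<in> y" for a x y
  proof -
    assume a: "a \<in> B" and xy: "(x, y) \<in> E"
    have cl: "E_closed E (basic a)" using a unfolding B_def by simp
    show "a \<in> x \<longleftrightarrow> a \<in> y"
      using cl EU[OF xy] xy Esym[OF xy] unfolding E_closed_def basic_def by blast
  qed
  have Bintro: "(\<And>x y. (x, y) \<in> E \<Longrightarrow> a \<in> x \<Longrightarrow> a \<in> y) \<Longrightarrow> a \<in> B" for a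
    unfolding B_def E_closed_def basic_def using EU by blast
  have sub: "subalgebra_dom imp B"
    unfolding subalgebra_dom_def
  proof (intro conjI ballI)
    show "top \<in> B" by (rule Bintro) (use EU ultra_props(1) in blast)
    show "bot \<in> B" by (rule Bintro) (use EU ultra_props(2) in blast)
  next
    fix a b assume a: "a \<in> B" and b: "b \<in> B"
    show "sup a b \<in> B"
    proof (rule Bintro)
      fix x y assume xy: "(x, y) \<in> E" "sup a b \<in> x"
      then show "sup a b \<in> y" using Bmem[OF a xy(1)] Bmem[OF b xy(1)] ultra_props(6) EU[OF xy(1)] by blast
    qed
    show "inf a b \<in> B"
    proof (rule Bintro)
      fix x y assume xy: "(x, y) \<in> E" "inf a b \<in> x"
      then show "inf a b \<in> y" using Bmem[OF a xy(1)] Bmem[OF b xy(1)] ultra_props(4) EU[OF xy(1)] by blast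
    qed
    show "imp a b \<in> B"
    proof (rule Bintro, rule ccontr)
      fix x y assume xy: "(x, y) \<in> E" "imp a b \<in> x" and nab: "imp a b \<notin> y"
      have xU: "x \<in> Ul" and yU: "y \<in> Ul" using EU[OF xy(1)] by auto
      have "\<exists>y'\<in>Ul. {c. imp a c \<in> y} \<subseteq> y' \<and> {- b} \<subseteq> y'"
      proof (rule ultra_exists2)
        have "imp a top \<in> y" using ca_top[OF ca] ultra_props(1)[OF yU] by simp
        then show "{c. imp a c \<in> y} \<noteq> {}" by blast
        show "\<forall>s\<in>{c. imp a c \<in> y}. \<forall>t\<in>{c. imp a c \<in> y}. inf s t \<in> {c. imp a c \<in> y}"
        proof (intro ballI)
          fix s t assume "s \<in> {c. imp a c \<in> y}" "t \<in> {c. imp a c \<in> y}"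
          then have "inf (imp a s) (imp a t) \<in> y" using ultra_props(4)[OF yU] by simp
          then have "imp a (inf s t) \<in> y" using ca_inf[OF ca] by simp
          then show "inf s t \<in> {c. imp a c \<in> y}" by simp
        qed
        show "\<forall>s\<in>{c. imp a c \<in> y}. \<forall>t\<in>{- b}. inf s t \<noteq> bot"
        proof (intro ballI notI)
          fix s t assume st: "s \<in> {c. imp a c \<in> y}" "t \<in> {- b}" "inf s t = bot"
          then have "s \<le> b" using inf_bot_le by fastforce
          then have "imp a s \<le> imp a b" by (rule ca_mono[OF ca])
          then show False using st nab ultra_props(3)[OF yU] by blast
        qed
      qed auto
      then obtain y' where y': "y' \<in> Ul" "{c. imp a c \<in> y} \<subseteq> y'" "- b \<in> y'" by blast
      define A where "A = {z. a \<le> z}"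
      have fA: "bfilter A" unfolding bfilter_def A_def by (auto intro: le_infI)
      have "Dimp imp y A \<subseteq> y'"
      proof
        fix c assume "c \<in> Dimp imp y A"
        then obtain a' where "a \<le> a'" "imp a' c \<in> y" unfolding Dimp_def A_def by blast
        then have "imp a c \<in> y" using ca_anti[OF ca] ultra_props(3)[OF yU] by blast
        then show "c \<in> y'" using y'(2) by blast
      qed
      then have T: "TA imp y (phi A) y'" unfolding TA_def using yU y'(1) fA by blast
      obtain x'' C where C: "(y', x'') \<in> E" "closedin stone_top C" "TA imp x C x''" "E_preceq E C (phi A)"
        using CC[OF Esym[OF xy(1)] closed_phi[OF fA] T] by blast
      obtain G where G: "bfilter G" "C = phi G" "Dimp imp x G \<subseteq> x''"
        using C(3) unfolding TA_def by blast
      have "a \<in> G"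
      proof (rule ccontr)
        assume naG: "a \<notin> G"
        have "\<exists>z\<in>Ul. G \<subseteq> z \<and> {- a} \<subseteq> z"
        proof (rule ultra_exists2)
          show "G \<noteq> {}" using bfilter_props(1)[OF G(1)] by auto
          show "\<forall>x\<in>G. \<forall>y\<in>G. inf x y \<in> G" using bfilter_props(3)[OF G(1)] by auto
          show "\<forall>s\<in>G. \<forall>t\<in>{- a}. inf s t \<noteq> bot"
          proof (intro ballI notI)
            fix s t assume st: "s \<in> G" "t \<in> {- a}" "inf s t = bot"
            then have "s \<le> a" using inf_bot_le by fastforce
            then show False using naG bfilter_props(2)[OF G(1) st(1)] by blast
          qed
        qed auto
        then obtain z where z: "z \<in> Ul" "G \<subseteq> z" "- a \<in> z" by blast
        then have "z \<in> C" using G(2) unfolding phi_def by auto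
        then obtain z0 where z0: "z0 \<in> phi A" "(z, z0) \<in> E" using C(4) unfolding E_preceq_def by blast
        have "a \<in> z0" using z0(1) unfolding phi_def A_def by auto
        then have "a \<in> z" using Bmem[OF a z0(2)] by blast
        then show False using z ultra_props(5) by blast
      qed
      then have "b \<in> Dimp imp x G" using xy(2) unfolding Dimp_def by blast
      then have "b \<in> x''" using G(3) by blast
      then have "b \<in> y'" using Bmem[OF b C(1)] by blast
      then show False using y'(1,3) ultra_props(5) by blast
    qed
  next
    fix a assume a: "a \<in> B"
    show "- a \<in> B"
    proof (rule Bintro)
      fix x y assume xy: "(x, y) \<in> E" "- a \<in> x"
      then show "- a \<in> y" using Bmem[OF a xy(1)] ultra_props(5) EU[OF xy(1)] by blast
    qed
  qed
  have "E = EB B"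
  proof
    show "E \<subseteq> EB B"
    proof
      fix p assume "p \<in> E"
      then obtain x y where p: "p = (x, y)" "(x, y) \<in> E" by (cases p) auto
      have "x \<inter> B = y \<inter> B" using Bmem[OF _ p(2)] by blast
      then show "p \<in> EB B" using p EU[OF p(2)] unfolding EB_def by auto
    qed
  next
    show "EB B \<subseteq> E"
    proof
      fix p assume "p \<in> EB B"
      then obtain x y where p: "p = (x, y)" "x \<in> Ul" "y \<in> Ul" "x \<inter> B = y \<inter> B" unfolding EB_def by auto
      show "p \<in> E"
      proof (rule ccontr)
        assume "p \<notin> E"
        then obtain S where S: "openin stone_top S" "closedin stone_top S" "E_closed E S" "x \<in> S" "y \<notin> S"
          using BE p unfolding boolean_equivalence_def by blast
        obtain a where a: "S = basic a" using clopen_basic[OF S(1,2)] by blast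
        have "a \<in> B" using S(3) a unfolding B_def by simp
        moreover have "a \<in> x" using S(4) a unfolding basic_def by simp
        ultimately have "a \<in> y" using p(4) by blast
        then have "y \<in> S" using a p(3) unfolding basic_def by simp
        then show False using S(5) by simp
      qed
    qed
  qed
  then show ?thesis using sub by blast
qed

theorem theorem7p6:
  fixes imp :: "'a::boolean_algebra \<Rightarrow> 'a \<Rightarrow> 'a"
  assumes "conditional_algebra imp"
  shows "bij_betw EB {B. subalgebra_dom imp B} {E. C_equivalence imp E}
       \<and> (\<forall>B1 B2. subalgebra_dom imp B1 \<longrightarrow> subalgebra_dom imp B2 \<longrightarrow>
              (B1 \<subseteq> B2 \<longleftrightarrow> EB B2 \<subseteq> EB B1))"
proof -
  have ord: "B1 \<subseteq> B2 \<longleftrightarrow> EB B2 \<subseteq> EB B1" if s1: "subalgebra_dom imp B1" and s2: "subalgebra_dom imp B2" for B1 B2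
  proof
    assume le: "B1 \<subseteq> B2"
    show "EB B2 \<subseteq> EB B1"
    proof
      fix p assume "p \<in> EB B2"
      then obtain u v where p: "p = (u, v)" "u \<in> Ul" "v \<in> Ul" "u \<inter> B2 = v \<inter> B2"
        unfolding EB_def by auto
      have "u \<inter> B1 = u \<inter> B2 \<inter> B1" "v \<inter> B1 = v \<inter> B2 \<inter> B1" using le by auto
      then have "u \<inter> B1 = v \<inter> B1" using p(4) by simp
      then show "p \<in> EB B1" using p unfolding EB_def by simp
    qed
  next
    assume le: "EB B2 \<subseteq> EB B1"
    show "B1 \<subseteq> B2"
    proof
      fix a assume a1: "a \<in> B1"
      show "a \<in> B2"
      proof (rule ccontr)
        assume "a \<notin> B2"
        have "\<exists>u\<in>Ul. \<exists>v\<in>Ul. u \<inter> B2 = v \<inter> B2 \<and> a \<in> u \<and> a \<notin> v"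
          by (rule sep[OF s2]) fact
        then obtain u v where uv: "u \<in> Ul" "v \<in> Ul" "u \<inter> B2 = v \<inter> B2" "a \<in> u" "a \<notin> v"
          by blast
        then have "(u, v) \<in> EB B2" unfolding EB_def by simp
        then have "(u, v) \<in> EB B1" using le by (rule subsetD[rotated])
        then have "u \<inter> B1 = v \<inter> B1" unfolding EB_def by auto
        moreover have "a \<in> u \<inter> B1" using uv(4) a1 by simp
        ultimately have "a \<in> v" by auto
        then show False using uv(5) by simp
      qed
    qed
  qed
  have "inj_on EB {B. subalgebra_dom imp B}"
  proof (rule inj_onI)
    fix B1 B2 assume b1: "B1 \<in> {B. subalgebra_dom imp B}" and b2: "B2 \<in> {B. subalgebra_dom imp B}"
      and e: "EB B1 = EB B2"
    have s1: "subalgebra_dom imp B1" and s2: "subalgebra_dom imp B2" using b1 b2 by auto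
    have "B1 \<subseteq> B2" using ord[OF s1 s2] e by simp
    moreover have "B2 \<subseteq> B1" using ord[OF s2 s1] e by simp
    ultimately show "B1 = B2" by (rule subset_antisym)
  qed
  moreover have "EB ` {B. subalgebra_dom imp B} = {E. C_equivalence imp E}"
  proof
    show "EB ` {B. subalgebra_dom imp B} \<subseteq> {E. C_equivalence imp E}"
    proof
      fix E assume "E \<in> EB ` {B. subalgebra_dom imp B}"
      then obtain B where "subalgebra_dom imp B" "E = EB B" by auto
      then show "E \<in> {E. C_equivalence imp E}" using EB_Ceq[OF assms] by simp
    qed
  next
    show "{E. C_equivalence imp E} \<subseteq> EB ` {B. subalgebra_dom imp B}"
    proof
      fix E assume "E \<in> {E. C_equivalence imp E}"
      then have "C_equivalence imp E" by simp
      then obtain B where B: "subalgebra_dom imp B" "E = EB B" using Ceq_surj[OF assms] by blast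
      show "E \<in> EB ` {B. subalgebra_dom imp B}"
        using B by blast
    qed
  qed
  ultimately have "bij_betw EB {B. subalgebra_dom imp B} {E. C_equivalence imp E}"
    unfolding bij_betw_def by (rule conjI)
  moreover have "\<forall>B1 B2. subalgebra_dom imp B1 \<longrightarrow> subalgebra_dom imp B2 \<longrightarrow>
              (B1 \<subseteq> B2 \<longleftrightarrow> EB B2 \<subseteq> EB B1)" using ord by (intro allI impI)
  ultimately show ?thesis by (rule conjI)
qed

end
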